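(* Let $d=1$, $x\in\mathbb R$, high frequency sampling, and $f$ continuous and bounded. Assume: (i) $\|g_u\|_\infty\le\pi(u)$, where $(1+u)\pi(u)$ is integrable on $(0,\infty)$ and $u\pi(u)$ is bounded and ultimately decreasing; moreover $g_u$ is continuous at $(x,x)$ for every $u>0$; (ii) $\sup_{(y,z)\in\mathbb R^2}|\sum_{r\ge1}\delta_ng_{r\delta_n}(y,z)-\int_0^\infty g_u(y,z)du|\to0$ as $\delta_n\downarrow0$. If $\delta_n=o(h_n)$, then $$\lim_{n\to\infty}T_n\mathrm{Var}(\hat f_n^{FP}(x))=2\int_0^\infty g_u(x,x)du.$$
   Context: Let $\{X_t,t\in\mathbb R\}$ be a measurable real-valued process. Every $X_t$ has Lebesgue density $f$. For $s\ne t$ the pair $(X_s,X_t)$ has a joint density $f_{(X_s,X_t)}=f_{(X_0,X_{|t-s|})}=:f_{|t-s|}$. For $u>0$ put $g_u(y,z)=f_u(y,z)-f(y)f(z)$. High frequency sampling: $t_k=k\delta_n$, with $\delta_n\to0$ and $T_n=n\delta_n\to\infty$. Frequency polygon. Let $h_n\to0$ with $nh_n\to\infty$. Bins are $[b_j,b_{j+1})$ of width $h_n$ with midpoints $c_j$. Set $\hat f_j=\frac1{nh_n}\sum_{k=1}^n\mathbf 1_{[b_j,b_{j+1})}(X_{t_k})$ and $\hat f_n^{FP}(x)=\frac{x-c_j}{h_n}\hat f_{j+1}+\frac{c_{j+1}-x}{h_n}\hat f_j$ for $x\in[c_j,c_{j+1})$. *)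

theory Defs
  imports "HOL-Probability.Probability"
begin

definition bin_left :: "real \<Rightarrow> real \<Rightarrow> int \<Rightarrow> real" where
  "bin_left a h j = a + real_of_int j * h"

definition bin_mid :: "real \<Rightarrow> real \<Rightarrow> int \<Rightarrow> real" where
  "bin_mid a h j = bin_left a h j + h / 2"

definition poly_index :: "real \<Rightarrow> real \<Rightarrow> real \<Rightarrow> int" where
  "poly_index a h x = \<lfloor>(x - a - h / 2) / h\<rfloor>"

definition hist_val ::
  "(real \<Rightarrow> 'a \<Rightarrow> real) \<Rightarrow> real \<Rightarrow> nat \<Rightarrow> real \<Rightarrow> real \<Rightarrow> int \<Rightarrow> 'a \<Rightarrow> real" where
  "hist_val X delta n a h j \<omega> =
     (1 / (real n * h)) *
       (\<Sum>k = 1..n. indicator {bin_left a h j ..< bin_left a h (j + 1)} (X (real k * delta) \<omega>))"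

definition freq_poly ::
  "(real \<Rightarrow> 'a \<Rightarrow> real) \<Rightarrow> real \<Rightarrow> nat \<Rightarrow> real \<Rightarrow> real \<Rightarrow> real \<Rightarrow> 'a \<Rightarrow> real" where
  "freq_poly X delta n a h x \<omega> =
     (let j = poly_index a h x in
       (x - bin_mid a h j) / h * hist_val X delta n a h (j + 1) \<omega>
       + (bin_mid a h (j + 1) - x) / h * hist_val X delta n a h j \<omega>)"

definition gcov :: "(real \<Rightarrow> real \<times> real \<Rightarrow> real) \<Rightarrow> (real \<Rightarrow> real) \<Rightarrow> real \<Rightarrow> real \<times> real \<Rightarrow> real" where
  "gcov fj f u p = fj u p - f (fst p) * f (snd p)"

end

theory Submission
  imports Defs
begin


lemma prod_integrable:
  fixes A B :: "real \<Rightarrow> real"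
  assumes A: "integrable lborel A" and B: "integrable lborel B"
  shows "integrable (lborel \<Otimes>\<^sub>M lborel) (\<lambda>p. A (fst p) * B (snd p))"
proof -
  have mA[measurable]: "A \<in> borel_measurable lborel" using A by auto
  have mB[measurable]: "B \<in> borel_measurable lborel" using B by auto
  have "(\<integral>\<^sup>+p. ennreal (norm (A (fst p) * B (snd p))) \<partial>(lborel \<Otimes>\<^sub>M lborel))
      = (\<integral>\<^sup>+y. \<integral>\<^sup>+z. ennreal (norm (A y)) * ennreal (norm (B z)) \<partial>lborel \<partial>lborel)"
    using lborel.nn_integral_fst[of "\<lambda>p. ennreal (norm (A (fst p))) * ennreal (norm (B (snd p)))" lborel]
    by (simp add: abs_mult ennreal_mult)
  also have "\<dots> = (\<integral>\<^sup>+y. ennreal (norm (A y)) * (\<integral>\<^sup>+z. ennreal (norm (B z)) \<partial>lborel) \<partial>lborel)"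
    by (subst nn_integral_cmult) auto
  also have "\<dots> = (\<integral>\<^sup>+y. ennreal (norm (A y)) \<partial>lborel) * (\<integral>\<^sup>+z. ennreal (norm (B z)) \<partial>lborel)"
    by (subst nn_integral_multc) auto
  also have "\<dots> < \<infinity>" using A B unfolding integrable_iff_bounded by (simp add: ennreal_mult_less_top)
  finally show ?thesis unfolding integrable_iff_bounded by auto
qed

lemma prod_integral:
  fixes A B :: "real \<Rightarrow> real"
  assumes A: "integrable lborel A" and B: "integrable lborel B"
  shows "(\<integral>p. A (fst p) * B (snd p) \<partial>(lborel \<Otimes>\<^sub>M lborel)) = integral\<^sup>L lborel A * integral\<^sup>L lborel B"
proof -
  have "(\<integral>p. A (fst p) * B (snd p) \<partial>(lborel \<Otimes>\<^sub>M lborel)) = (\<integral>y. (\<integral>z. A y * B z \<partial>lborel) \<partial>lborel)"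
    using lborel_pair.integral_fst[of "\<lambda>y z. A y * B z", symmetric] prod_integrable[OF A B]
    by (simp add: case_prod_beta')
  also have "\<dots> = (\<integral>y. A y * integral\<^sup>L lborel B \<partial>lborel)" by simp
  also have "\<dots> = integral\<^sup>L lborel A * integral\<^sup>L lborel B" by simp
  finally show ?thesis .
qed




lemma sum_rev_aux: "(\<Sum>l<n. c (n - l)) = (\<Sum>r<n. (c (Suc r) :: real))"
  by (rule sum.reindex_bij_witness[where i="\<lambda>r. n - Suc r" and j="\<lambda>l. n - Suc l"]) (auto simp: Suc_diff_Suc)

lemma double_sum_abs:
  fixes c :: "nat \<Rightarrow> real"
  shows "(\<Sum>k<n. \<Sum>l<n. c (nat \<bar>int k - int l\<bar>)) = real n * c 0 + 2 * (\<Sum>r<n. real (n - Suc r) * c (Suc r))"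
proof (induction n)
  case 0 then show ?case by simp
next
  case (Suc n)
  have row: "(\<Sum>l<n. c (nat \<bar>int n - int l\<bar>)) = (\<Sum>r<n. c (Suc r))"
  proof -
    have "(\<Sum>l<n. c (nat \<bar>int n - int l\<bar>)) = (\<Sum>l<n. c (n - l))"
      by (intro sum.cong) (auto simp: nat_diff_distrib)
    then show ?thesis using sum_rev_aux by simp
  qed
  have col: "(\<Sum>k<n. c (nat \<bar>int k - int n\<bar>)) = (\<Sum>r<n. c (Suc r))"
    using row by (simp add: abs_minus_commute)
  have "(\<Sum>k<Suc n. \<Sum>l<Suc n. c (nat \<bar>int k - int l\<bar>))
     = (\<Sum>k<n. \<Sum>l<n. c (nat \<bar>int k - int l\<bar>)) + (\<Sum>k<n. c (nat \<bar>int k - int n\<bar>))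
       + (\<Sum>l<n. c (nat \<bar>int n - int l\<bar>)) + c 0"
    by (simp add: sum.distrib)
  also have "\<dots> = real n * c 0 + 2 * (\<Sum>r<n. real (n - Suc r) * c (Suc r)) + 2 * (\<Sum>r<n. c (Suc r)) + c 0"
    using Suc row col by simp
  also have "(\<Sum>r<n. real (n - Suc r) * c (Suc r)) + (\<Sum>r<n. c (Suc r)) = (\<Sum>r<Suc n. real (Suc n - Suc r) * c (Suc r))"
    by (simp add: sum.distrib[symmetric] algebra_simps Suc_diff_Suc of_nat_diff)
  then have "real n * c 0 + 2 * (\<Sum>r<n. real (n - Suc r) * c (Suc r)) + 2 * (\<Sum>r<n. c (Suc r)) + c 0
      = real (Suc n) * c 0 + 2 * (\<Sum>r<Suc n. real (Suc n - Suc r) * c (Suc r))"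
    by (simp add: algebra_simps)
  finally show ?case .
qed




lemma riemann_bound:
  fixes \<psi> :: "real \<Rightarrow> real"
  assumes nn: "\<And>u. 0 < u \<Longrightarrow> 0 \<le> \<psi> u" and bd: "\<And>u. 0 < u \<Longrightarrow> \<psi> u \<le> B"
    and decr: "\<And>u v. U \<le> u \<Longrightarrow> u \<le> v \<Longrightarrow> \<psi> v \<le> \<psi> u" and U: "0 \<le> U"
    and int: "integrable lborel (\<lambda>u. indicator {0<..} u * \<psi> u)"
    and d: "0 < d" "d \<le> 1"
  shows "(\<Sum>r<N. d * \<psi> (real (Suc r) * d)) \<le> (\<integral>u. indicator {0<..} u * \<psi> u \<partial>lborel) + B * (U + 1)"
proof -
  have B0: "0 \<le> B" using nn[of 1] bd[of 1] by simp
  define I where "I r = {real r * d <.. real (Suc r) * d}" for r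
  define s where "s u = (\<Sum>r<N. \<psi> (real (Suc r) * d) * indicator (I r) u)" for u
  define \<Phi> where "\<Phi> u = indicator {0<..} u * \<psi> u + B * indicator {0<..U + 1} u" for u :: real
  have intI: "integrable lborel (indicator (I r) :: real \<Rightarrow> real)" for r
    unfolding I_def using d by (auto simp: integrable_indicator_iff)
  have mI: "measure lborel (I r) = d" for r
    unfolding I_def using d by (simp add: measure_def algebra_simps)
  have int_s: "integrable lborel s" unfolding s_def[abs_def]
    by (intro Bochner_Integration.integrable_sum Bochner_Integration.integrable_mult_right intI)
  have mI': "integral\<^sup>L lborel (indicator (I r) :: real \<Rightarrow> real) = d" for r
    using mI[of r] by simp
  have "integral\<^sup>L lborel s = (\<Sum>r<N. \<integral>u. \<psi> (real (Suc r) * d) * indicator (I r) u \<partial>lborel)"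
    unfolding s_def[abs_def]
    by (rule Bochner_Integration.integral_sum) (intro Bochner_Integration.integrable_mult_right intI)
  also have "\<dots> = (\<Sum>r<N. d * \<psi> (real (Suc r) * d))"
    by (intro sum.cong refl) (simp only: Bochner_Integration.integral_mult_right_zero mI', rule mult.commute)
  finally have i_s: "integral\<^sup>L lborel s = (\<Sum>r<N. d * \<psi> (real (Suc r) * d))" .
  have int2: "integrable lborel (indicator {0<..U + 1} :: real \<Rightarrow> real)"
    using U by (auto simp: integrable_indicator_iff)
  have int_Phi: "integrable lborel \<Phi>" unfolding \<Phi>_def[abs_def] using int int2 by auto
  have iPhi: "integral\<^sup>L lborel \<Phi> = (\<integral>u. indicator {0<..} u * \<psi> u \<partial>lborel) + B * (U + 1)"
    unfolding \<Phi>_def[abs_def] using int int2 U by (simp add: measure_def)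
  have Phi_nn: "0 \<le> \<Phi> u" for u
    unfolding \<Phi>_def using nn B0 by (auto simp: indicator_def)
  have uniq: "r = r'" if "u \<in> I r" "u \<in> I r'" for u r r'
  proof -
    from that have "real r * d < real (Suc r') * d" "real r' * d < real (Suc r) * d"
      unfolding I_def by auto
    then have "real r < real (Suc r')" "real r' < real (Suc r)" using d by auto
    then show ?thesis by linarith
  qed
  have le: "s u \<le> \<Phi> u" for u
  proof (cases "\<exists>r0<N. u \<in> I r0")
    case False
    then have "s u = 0" unfolding s_def by (intro sum.neutral) auto
    then show ?thesis using Phi_nn by simp
  next
    case True
    then obtain r0 where r0: "r0 < N" "u \<in> I r0" by blast
    have "s u = \<psi> (real (Suc r0) * d) * indicator (I r0) u + (\<Sum>r\<in>{..<N} - {r0}. \<psi> (real (Suc r) * d) * indicator (I r) u)"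
      unfolding s_def using r0 by (subst sum.remove[of _ r0]) auto
    also have "(\<Sum>r\<in>{..<N} - {r0}. \<psi> (real (Suc r) * d) * indicator (I r) u) = 0"
      using uniq r0 by (intro sum.neutral) (auto simp: indicator_def)
    finally have su: "s u = \<psi> (real (Suc r0) * d)" using r0 by simp
    have u: "real r0 * d < u" "u \<le> real (Suc r0) * d" using r0 unfolding I_def by auto
    have u0: "0 < u" using u d by (smt (verit) mult_nonneg_nonneg of_nat_0_le_iff)
    show ?thesis
    proof (cases "U \<le> real r0 * d")
      case True
      then have "\<psi> (real (Suc r0) * d) \<le> \<psi> u" using decr u by auto
      then show ?thesis unfolding su \<Phi>_def using u0 B0 by (auto simp: indicator_def)
    next
      case False
      then have "u \<le> U + 1" using u d by (simp add: algebra_simps)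
      then show ?thesis unfolding su \<Phi>_def using u0 nn[of u] bd[of "real (Suc r0) * d"] d
        by (auto simp: indicator_def)
    qed
  qed
  have "integral\<^sup>L lborel s \<le> integral\<^sup>L lborel \<Phi>"
    by (rule integral_mono[OF int_s int_Phi le])
  then show ?thesis unfolding i_s iPhi .
qed




locale P2 =
  fixes M :: "'a measure"
    and X :: "real \<Rightarrow> 'a \<Rightarrow> real"
    and f :: "real \<Rightarrow> real"
    and fj :: "real \<Rightarrow> real \<times> real \<Rightarrow> real"
    and \<pi> :: "real \<Rightarrow> real"
    and delta h a :: "nat \<Rightarrow> real"
    and x :: real
  assumes prob: "prob_space M"
    and f_nonneg: "\<And>y. 0 \<le> f y"
    and marg: "\<And>t. distributed M lborel (X t) (\<lambda>y. ennreal (f y))"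
    and fj_nonneg: "\<And>u p. 0 < u \<Longrightarrow> 0 \<le> fj u p"
    and joint: "\<And>s t. s \<noteq> t \<Longrightarrow>
        distributed M (lborel \<Otimes>\<^sub>M lborel) (\<lambda>\<omega>. (X s \<omega>, X t \<omega>)) (\<lambda>p. ennreal (fj \<bar>t - s\<bar> p))"
    and fj_meas: "\<And>p. (\<lambda>u. fj u p) \<in> borel_measurable borel"
    and f_cont: "continuous_on UNIV f"
    and f_bdd: "bounded (range f)"
    and delta_pos: "\<And>n. 0 < delta n"
    and delta_lim: "delta \<longlonglongrightarrow> 0"
    and T_lim: "filterlim (\<lambda>n. real n * delta n) at_top sequentially"
    and h_pos: "\<And>n. 0 < h n"
    and h_lim: "h \<longlonglongrightarrow> 0"
    and g_bound: "\<And>u p. 0 < u \<Longrightarrow> \<bar>gcov fj f u p\<bar> \<le> \<pi> u"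
    and pi_int: "set_integrable lborel {0<..} (\<lambda>u. (1 + u) * \<pi> u)"
    and upi_bdd: "\<exists>B. \<forall>u>0. \<bar>u * \<pi> u\<bar> \<le> B"
    and upi_decr: "\<exists>U. \<forall>u v. U \<le> u \<longrightarrow> u \<le> v \<longrightarrow> v * \<pi> v \<le> u * \<pi> u"
    and g_cont: "\<And>u. 0 < u \<Longrightarrow> isCont (gcov fj f u) (x, x)"
    and riem_summable: "\<And>n p. summable (\<lambda>r. delta n * gcov fj f (real (Suc r) * delta n) p)"
    and riem_unif: "\<And>\<epsilon>. 0 < \<epsilon> \<Longrightarrow> eventually (\<lambda>n. \<forall>p.
        \<bar>(\<Sum>r. delta n * gcov fj f (real (Suc r) * delta n) p)
          - (LINT u:{0<..}|lborel. gcov fj f u p)\<bar> \<le> \<epsilon>) sequentially"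
    and delta_o_h: "(\<lambda>n. delta n / h n) \<longlonglongrightarrow> 0"
begin

definition "jj n = poly_index (a n) (h n) x"
definition "bL n = bin_left (a n) (h n) (jj n)"
definition "w1 n = (x - bin_mid (a n) (h n) (jj n)) / h n"
definition "w0 n = (bin_mid (a n) (h n) (jj n + 1) - x) / h n"
definition "phi n y = w1 n * indicator {bL n + h n..<bL n + 2 * h n} y + w0 n * indicator {bL n..<bL n + h n} y"
definition "Psi n p = (phi n (fst p) / h n) * (phi n (snd p) / h n)"
definition "g u p = gcov fj f u p"

lemma bins:
  shows "bL n + h n / 2 \<le> x" "x < bL n + 3 * h n / 2"
    "w1 n = (x - bL n - h n / 2) / h n" "w0 n = 1 - w1 n" "0 \<le> w1 n" "w1 n \<le> 1"
proof -
  have hp: "0 < h n" by (rule h_pos)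
  let ?q = "(x - a n - h n / 2) / h n"
  have fl: "real_of_int (jj n) \<le> ?q" "?q < real_of_int (jj n) + 1"
    unfolding jj_def poly_index_def by linarith+
  have bl: "bL n = a n + real_of_int (jj n) * h n" unfolding bL_def bin_left_def ..
  from fl(1) hp have "real_of_int (jj n) * h n \<le> x - a n - h n / 2"
    by (simp add: pos_le_divide_eq)
  then show 1: "bL n + h n / 2 \<le> x" using bl by simp
  from fl(2) hp have "x - a n - h n / 2 < (real_of_int (jj n) + 1) * h n"
    by (simp add: pos_divide_less_eq)
  then show 2: "x < bL n + 3 * h n / 2" using bl by (simp add: algebra_simps)
  show w1: "w1 n = (x - bL n - h n / 2) / h n"
    unfolding w1_def bin_mid_def bL_def by simp
  show "w0 n = 1 - w1 n"
    unfolding w0_def w1 bin_mid_def bin_left_def bL_def using hp by (simp add: field_simps)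
  show "0 \<le> w1 n" unfolding w1 using 1 hp by simp
  show "w1 n \<le> 1" unfolding w1 using 2 hp by simp
qed

lemma phi_bounds: "0 \<le> phi n y" "phi n y \<le> 1"
  "phi n y \<le> indicator {bL n..<bL n + 2 * h n} y"
  using bins[of n] h_pos[of n] unfolding phi_def by (auto simp: indicator_def)

lemma phi_support: "phi n y \<noteq> 0 \<Longrightarrow> \<bar>y - x\<bar> < 2 * h n"
proof -
  assume "phi n y \<noteq> 0"
  moreover have "\<not> (bL n \<le> y \<and> y < bL n + 2 * h n) \<Longrightarrow> phi n y = 0"
    using h_pos[of n] by (auto simp: phi_def indicator_def)
  ultimately have "bL n \<le> y \<and> y < bL n + 2 * h n" by blast
  then show ?thesis using bins[of n] h_pos[of n] by linarith
qed

lemma phi_meas[measurable]: "phi n \<in> borel_measurable lborel"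
  unfolding phi_def by measurable

lemma int_ind: "integrable lborel (indicator {c..<d} :: real \<Rightarrow> real)"
  by (cases "c \<le> d") (auto simp: integrable_indicator_iff)

lemma phi_int: "integrable lborel (phi n)"
  unfolding phi_def by (intro Bochner_Integration.integrable_add Bochner_Integration.integrable_mult_right int_ind)

lemma phi_integral: "integral\<^sup>L lborel (phi n) = h n"
proof -
  have "integral\<^sup>L lborel (phi n) = w1 n * h n + w0 n * h n"
    unfolding phi_def using int_ind h_pos[of n] by (simp add: measure_def)
  then show ?thesis using bins[of n] by (simp add: algebra_simps)
qed

lemma phih_int: "integrable lborel (\<lambda>y. phi n y / h n)"
  using phi_int by auto

lemma Psi_int: "integrable (lborel \<Otimes>\<^sub>M lborel) (Psi n)"
  unfolding Psi_def[abs_def] by (rule prod_integrable[OF phih_int phih_int])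

lemma Psi_integral: "integral\<^sup>L (lborel \<Otimes>\<^sub>M lborel) (Psi n) = 1"
proof -
  have 1: "integral\<^sup>L lborel (\<lambda>y. phi n y / h n) = 1"
    using phi_integral[of n] h_pos[of n] by simp
  have "integral\<^sup>L (lborel \<Otimes>\<^sub>M lborel) (Psi n) = integral\<^sup>L lborel (\<lambda>y. phi n y / h n) * integral\<^sup>L lborel (\<lambda>y. phi n y / h n)"
    unfolding Psi_def[abs_def] by (rule prod_integral[OF phih_int phih_int])
  then show ?thesis using 1 by simp
qed

lemma Psi_nonneg: "0 \<le> Psi n p"
  unfolding Psi_def using phi_bounds[of n] h_pos[of n] by simp

lemma Psi_support: "Psi n p \<noteq> 0 \<Longrightarrow> \<bar>fst p - x\<bar> < 2 * h n \<and> \<bar>snd p - x\<bar> < 2 * h n"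
  unfolding Psi_def using phi_support by auto

lemma Psi_meas[measurable]: "Psi n \<in> borel_measurable (lborel \<Otimes>\<^sub>M lborel)"
  using Psi_int by auto

definition "Fb = (SOME F. \<forall>y. \<bar>f y\<bar> \<le> F)"

lemma Fb: "\<bar>f y\<bar> \<le> Fb"
proof -
  obtain F where "\<forall>z\<in>range f. norm z \<le> F" using f_bdd unfolding bounded_iff by blast
  then have "\<exists>F. \<forall>y. \<bar>f y\<bar> \<le> F" by auto
  then show ?thesis unfolding Fb_def by (rule someI_ex[where P="\<lambda>F. \<forall>y. \<bar>f y\<bar> \<le> F", THEN spec])
qed

lemma f_meas[measurable]: "f \<in> borel_measurable lborel"
  using borel_measurable_continuous_onI[OF f_cont] by simp

lemma fj_meas2[measurable]: "0 < u \<Longrightarrow> fj u \<in> borel_measurable (lborel \<Otimes>\<^sub>M lborel)"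
proof -
  assume u: "0 < u"
  have "distributed M (lborel \<Otimes>\<^sub>M lborel) (\<lambda>\<omega>. (X 0 \<omega>, X u \<omega>)) (\<lambda>p. ennreal (fj \<bar>u - 0\<bar> p))"
    using joint[of 0 u] u by simp
  then have "(\<lambda>p. fj \<bar>u - 0\<bar> p) \<in> borel_measurable (lborel \<Otimes>\<^sub>M lborel)"
    by (rule distributed_real_measurable[rotated]) (use fj_nonneg u in auto)
  then show ?thesis using u by simp
qed

lemma g_meas[measurable]: "0 < u \<Longrightarrow> g u \<in> borel_measurable (lborel \<Otimes>\<^sub>M lborel)"
  unfolding g_def[abs_def] gcov_def by measurable

lemma pi_nonneg: "0 < u \<Longrightarrow> 0 \<le> \<pi> u"
  using g_bound[of u "(0,0)"] by linarith

lemma Psig_int: "0 < u \<Longrightarrow> integrable (lborel \<Otimes>\<^sub>M lborel) (\<lambda>p. Psi n p * g u p)"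
proof -
  assume u: "0 < u"
  show ?thesis
  proof (rule Bochner_Integration.integrable_bound)
    show "integrable (lborel \<Otimes>\<^sub>M lborel) (\<lambda>p. Psi n p * \<pi> u)"
      using Psi_int by auto
    show "(\<lambda>p. Psi n p * g u p) \<in> borel_measurable (lborel \<Otimes>\<^sub>M lborel)" using u by measurable
    show "AE p in lborel \<Otimes>\<^sub>M lborel. norm (Psi n p * g u p) \<le> norm (Psi n p * \<pi> u)"
      using g_bound[OF u] Psi_nonneg pi_nonneg[OF u]
      by (auto simp: abs_mult g_def intro!: mult_left_mono)
  qed
qed

lemma C_bound: "0 < u \<Longrightarrow> \<bar>\<integral>p. Psi n p * g u p \<partial>(lborel \<Otimes>\<^sub>M lborel)\<bar> \<le> \<pi> u"
proof -
  assume u: "0 < u"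
  have "\<bar>\<integral>p. Psi n p * g u p \<partial>(lborel \<Otimes>\<^sub>M lborel)\<bar> \<le> (\<integral>p. Psi n p * \<pi> u \<partial>(lborel \<Otimes>\<^sub>M lborel))"
    apply (rule integral_abs_bound_integral[OF Psig_int[OF u]])
    using Psi_int apply simp
    using g_bound[OF u] Psi_nonneg pi_nonneg[OF u]
    by (auto simp: abs_mult g_def intro!: mult_left_mono)
  also have "\<dots> = \<pi> u" using Psi_integral[of n] by simp
  finally show ?thesis .
qed

end



lemma var_sum:
  fixes Z :: "nat \<Rightarrow> 'a \<Rightarrow> real"
  assumes P: "prob_space M" and meas: "\<And>k. Z k \<in> borel_measurable M"
    and bnd: "\<And>k \<omega>. \<bar>Z k \<omega>\<bar> \<le> 1" and fin: "finite I"
  shows "prob_space.variance M (\<lambda>\<omega>. c * (\<Sum>k\<in>I. Z k \<omega>))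
     = c\<^sup>2 * (\<Sum>k\<in>I. \<Sum>l\<in>I. (prob_space.expectation M (\<lambda>\<omega>. Z k \<omega> * Z l \<omega>)
            - prob_space.expectation M (Z k) * prob_space.expectation M (Z l)))"
proof -
  interpret prob_space M by (rule P)
  have iZ: "integrable M (Z k)" for k
    by (rule integrable_const_bound[where B=1]) (use bnd meas in auto)
  have iZZ: "integrable M (\<lambda>\<omega>. Z k \<omega> * Z l \<omega>)" for k l
    by (rule integrable_const_bound[where B=1]) (use bnd meas in \<open>auto simp: abs_mult intro!: AE_I2 mult_le_one\<close>)
  have i1: "integrable M (\<lambda>\<omega>. c * (\<Sum>k\<in>I. Z k \<omega>))" using iZ by auto
  have sq: "(c * (\<Sum>k\<in>I. Z k \<omega>))\<^sup>2 = c\<^sup>2 * (\<Sum>k\<in>I. \<Sum>l\<in>I. Z k \<omega> * Z l \<omega>)" for \<omega>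
    by (simp add: power2_eq_square sum_product algebra_simps)
  have i2: "integrable M (\<lambda>\<omega>. (c * (\<Sum>k\<in>I. Z k \<omega>))\<^sup>2)" unfolding sq using iZZ by auto
  have V0: "variance (\<lambda>\<omega>. c * (\<Sum>k\<in>I. Z k \<omega>)) = expectation (\<lambda>\<omega>. (c * (\<Sum>k\<in>I. Z k \<omega>))\<^sup>2) - (expectation (\<lambda>\<omega>. c * (\<Sum>k\<in>I. Z k \<omega>)))\<^sup>2"
    by (rule variance_eq[OF i1 i2])
  have E2: "expectation (\<lambda>\<omega>. (c * (\<Sum>k\<in>I. Z k \<omega>))\<^sup>2) = c\<^sup>2 * (\<Sum>k\<in>I. \<Sum>l\<in>I. expectation (\<lambda>\<omega>. Z k \<omega> * Z l \<omega>))"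
    unfolding sq using iZZ by (simp add: Bochner_Integration.integral_sum)
  have E1: "expectation (\<lambda>\<omega>. c * (\<Sum>k\<in>I. Z k \<omega>)) = c * (\<Sum>k\<in>I. expectation (Z k))"
    using iZ by (simp add: Bochner_Integration.integral_sum)
  have V: "variance (\<lambda>\<omega>. c * (\<Sum>k\<in>I. Z k \<omega>)) = c\<^sup>2 * (\<Sum>k\<in>I. \<Sum>l\<in>I. expectation (\<lambda>\<omega>. Z k \<omega> * Z l \<omega>)) - (c * (\<Sum>k\<in>I. expectation (Z k)))\<^sup>2"
    using V0 unfolding E2 E1 .
  have sq2: "(c * (\<Sum>k\<in>I. expectation (Z k)))\<^sup>2 = c\<^sup>2 * (\<Sum>k\<in>I. \<Sum>l\<in>I. expectation (Z k) * expectation (Z l))"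
    by (simp add: power2_eq_square sum_product algebra_simps)
  show ?thesis unfolding V sq2 by (simp add: sum_subtractf right_diff_distrib)
qed

context P2 begin

lemma X_meas[measurable]: "X t \<in> borel_measurable M"
  using distributed_measurable[OF marg[of t]] by simp

lemma freq_eq:
  "freq_poly X (delta n) n (a n) (h n) x \<omega> = (1 / (real n * h n)) * (\<Sum>k\<in>{1..n}. phi n (X (real k * delta n) \<omega>))"
proof -
  have e1: "bin_left (a n) (h n) (jj n + 1) = bL n + h n" "bin_left (a n) (h n) (jj n + 1 + 1) = bL n + 2 * h n"
    unfolding bin_left_def bL_def by (simp_all add: algebra_simps)
  have e2: "bin_left (a n) (h n) (jj n) = bL n" unfolding bL_def ..
  have gen: "\<And>(A::nat \<Rightarrow> real) B c. w1 n * (c * (\<Sum>k\<in>{1..n}. A k)) + w0 n * (c * (\<Sum>k\<in>{1..n}. B k))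
      = c * (\<Sum>k\<in>{1..n}. w1 n * A k + w0 n * B k)"
    by (simp add: sum.distrib sum_distrib_left algebra_simps)
  show ?thesis
    unfolding freq_poly_def Let_def hist_val_def jj_def[symmetric] e1 e2 w1_def[symmetric] w0_def[symmetric]
      phi_def
    by (rule gen)
qed

end



context P2 begin

definition "m n = (\<integral>y. f y * phi n y \<partial>lborel)"
definition "C n r = (\<integral>p. Psi n p * g (real r * delta n) p \<partial>(lborel \<Otimes>\<^sub>M lborel))"
definition "cc n r = (if r = 0 then (\<integral>y. f y * (phi n y * phi n y) \<partial>lborel) - (m n)\<^sup>2 else (h n)\<^sup>2 * C n r)"

lemma EZ: "prob_space.expectation M (\<lambda>\<omega>. phi n (X t \<omega>)) = m n"
  unfolding m_def using distributed_integral[OF marg[of t], of "phi n"] f_nonneg by simp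

lemma EZ2: "prob_space.expectation M (\<lambda>\<omega>. phi n (X t \<omega>) * phi n (X t \<omega>)) = (\<integral>y. f y * (phi n y * phi n y) \<partial>lborel)"
  using distributed_integral[OF marg[of t], of "\<lambda>y. phi n y * phi n y"] f_nonneg by simp

lemma EZZ: "s \<noteq> t \<Longrightarrow> prob_space.expectation M (\<lambda>\<omega>. phi n (X s \<omega>) * phi n (X t \<omega>))
   = (\<integral>p. fj \<bar>t - s\<bar> p * (phi n (fst p) * phi n (snd p)) \<partial>(lborel \<Otimes>\<^sub>M lborel))"
  using distributed_integral[OF joint[of s t], of "\<lambda>p. phi n (fst p) * phi n (snd p)"] fj_nonneg[of "\<bar>t - s\<bar>"]
  by simp

lemma fphi_int: "integrable lborel (\<lambda>y. f y * phi n y)"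
proof (rule Bochner_Integration.integrable_bound)
  show "integrable lborel (\<lambda>y. Fb * phi n y)" using phi_int by auto
  show "(\<lambda>y. f y * phi n y) \<in> borel_measurable lborel" by measurable
  show "AE y in lborel. norm (f y * phi n y) \<le> norm (Fb * phi n y)"
    using Fb phi_bounds f_nonneg by (auto simp: abs_mult intro!: AE_I2 mult_right_mono order_trans[OF _ abs_ge_self])
qed

lemma m_sq: "(m n)\<^sup>2 = (\<integral>p. (f (fst p) * phi n (fst p)) * (f (snd p) * phi n (snd p)) \<partial>(lborel \<Otimes>\<^sub>M lborel))"
  unfolding m_def power2_eq_square using prod_integral[OF fphi_int fphi_int] by simp

lemma pp_int: "integrable (lborel \<Otimes>\<^sub>M lborel) (\<lambda>p. phi n (fst p) * phi n (snd p))"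
  using prod_integrable[OF phi_int phi_int] .

lemma cov_off:
  assumes u: "0 < u"
  shows "(\<integral>p. fj u p * (phi n (fst p) * phi n (snd p)) \<partial>(lborel \<Otimes>\<^sub>M lborel)) - (m n)\<^sup>2
    = (h n)\<^sup>2 * (\<integral>p. Psi n p * g u p \<partial>(lborel \<Otimes>\<^sub>M lborel))"
proof -
  have i2: "integrable (lborel \<Otimes>\<^sub>M lborel) (\<lambda>p. (f (fst p) * phi n (fst p)) * (f (snd p) * phi n (snd p)))"
    using prod_integrable[OF fphi_int fphi_int] .
  have i1: "integrable (lborel \<Otimes>\<^sub>M lborel) (\<lambda>p. fj u p * (phi n (fst p) * phi n (snd p)))"
  proof (rule Bochner_Integration.integrable_bound)
    show "integrable (lborel \<Otimes>\<^sub>M lborel) (\<lambda>p. (\<pi> u + Fb * Fb) * (phi n (fst p) * phi n (snd p)))"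
      using pp_int by auto
    show "(\<lambda>p. fj u p * (phi n (fst p) * phi n (snd p))) \<in> borel_measurable (lborel \<Otimes>\<^sub>M lborel)"
      using u by measurable
    show "AE p in lborel \<Otimes>\<^sub>M lborel. norm (fj u p * (phi n (fst p) * phi n (snd p)))
        \<le> norm ((\<pi> u + Fb * Fb) * (phi n (fst p) * phi n (snd p)))"
    proof (intro AE_I2)
      fix p :: "real \<times> real"
      have "\<bar>fj u p\<bar> \<le> \<bar>g u p\<bar> + \<bar>f (fst p)\<bar> * \<bar>f (snd p)\<bar>"
        unfolding g_def gcov_def by (simp add: abs_mult[symmetric] abs_triangle_ineq4[THEN order_trans] abs_diff_le_iff)
      also have "\<dots> \<le> \<pi> u + Fb * Fb"
        using g_bound[OF u, of p] Fb[of "fst p"] Fb[of "snd p"] unfolding g_def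
        by (intro add_mono mult_mono) auto
      finally have a: "\<bar>fj u p\<bar> \<le> \<pi> u + Fb * Fb" .
      have b: "0 \<le> phi n (fst p) * phi n (snd p)" using phi_bounds by auto
      show "norm (fj u p * (phi n (fst p) * phi n (snd p))) \<le> norm ((\<pi> u + Fb * Fb) * (phi n (fst p) * phi n (snd p)))"
        using a b by (auto simp: abs_mult intro!: mult_right_mono)
    qed
  qed
  have "(\<integral>p. fj u p * (phi n (fst p) * phi n (snd p)) \<partial>(lborel \<Otimes>\<^sub>M lborel)) - (m n)\<^sup>2
      = (\<integral>p. fj u p * (phi n (fst p) * phi n (snd p)) - (f (fst p) * phi n (fst p)) * (f (snd p) * phi n (snd p)) \<partial>(lborel \<Otimes>\<^sub>M lborel))"
    unfolding m_sq using i1 i2 by simp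
  also have "\<dots> = (\<integral>p. (h n)\<^sup>2 * (Psi n p * g u p) \<partial>(lborel \<Otimes>\<^sub>M lborel))"
    using h_pos[of n] by (intro Bochner_Integration.integral_cong) (auto simp: g_def gcov_def Psi_def power2_eq_square field_simps)
  also have "\<dots> = (h n)\<^sup>2 * (\<integral>p. Psi n p * g u p \<partial>(lborel \<Otimes>\<^sub>M lborel))" by simp
  finally show ?thesis .
qed

lemma cov_eq:
  "prob_space.expectation M (\<lambda>\<omega>. phi n (X (real k * delta n) \<omega>) * phi n (X (real l * delta n) \<omega>))
   - prob_space.expectation M (\<lambda>\<omega>. phi n (X (real k * delta n) \<omega>)) * prob_space.expectation M (\<lambda>\<omega>. phi n (X (real l * delta n) \<omega>))
   = cc n (nat \<bar>int k - int l\<bar>)"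
proof (cases "k = l")
  case True
  then show ?thesis unfolding True EZ EZ2 cc_def by (simp add: power2_eq_square)
next
  case False
  have dp: "0 < delta n" by (rule delta_pos)
  have ne: "real k * delta n \<noteq> real l * delta n" using False dp by simp
  have u: "\<bar>real l * delta n - real k * delta n\<bar> = real (nat \<bar>int k - int l\<bar>) * delta n"
    using dp by (simp add: left_diff_distrib[symmetric] abs_mult of_nat_nat)
  have up: "0 < real (nat \<bar>int k - int l\<bar>) * delta n" using False dp by simp
  have nz: "nat \<bar>int k - int l\<bar> \<noteq> 0" using False by simp
  show ?thesis
    unfolding EZZ[OF ne] EZ u cc_def C_def using cov_off[OF up, of n] nz by (simp add: power2_eq_square)
qed

end



context P2 begin

lemma TVar:
  assumes n: "0 < n"
  shows "real n * delta n * prob_space.variance M (freq_poly X (delta n) n (a n) (h n) x)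
    = delta n * cc n 0 / (h n)\<^sup>2 + 2 * (\<Sum>r<n. delta n * (real (n - Suc r) / real n) * C n (Suc r))"
proof -
  let ?Z = "\<lambda>k \<omega>. phi n (X (real k * delta n) \<omega>)"
  have fe: "freq_poly X (delta n) n (a n) (h n) x = (\<lambda>\<omega>. (1 / (real n * h n)) * (\<Sum>k\<in>{1..n}. ?Z k \<omega>))"
    using freq_eq by auto
  have bnd: "\<And>k \<omega>. \<bar>?Z k \<omega>\<bar> \<le> 1" using phi_bounds by (simp add: abs_le_iff)
  have meas: "\<And>k. ?Z k \<in> borel_measurable M" by measurable
  have V: "prob_space.variance M (freq_poly X (delta n) n (a n) (h n) x)
     = (1 / (real n * h n))\<^sup>2 * (\<Sum>k\<in>{1..n}. \<Sum>l\<in>{1..n}. cc n (nat \<bar>int k - int l\<bar>))"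
    unfolding fe var_sum[OF prob meas bnd finite_atLeastAtMost] cov_eq by simp
  have "(\<Sum>k\<in>{1..n}. \<Sum>l\<in>{1..n}. cc n (nat \<bar>int k - int l\<bar>)) = (\<Sum>k<n. \<Sum>l<n. cc n (nat \<bar>int k - int l\<bar>))"
    unfolding One_nat_def sum.atLeast1_atMost_eq by simp
  also have "\<dots> = real n * cc n 0 + 2 * (\<Sum>r<n. real (n - Suc r) * cc n (Suc r))"
    by (rule double_sum_abs)
  also have "(\<Sum>r<n. real (n - Suc r) * cc n (Suc r)) = (h n)\<^sup>2 * (\<Sum>r<n. real (n - Suc r) * C n (Suc r))"
    unfolding cc_def by (simp add: sum_distrib_left algebra_simps)
  finally have S: "(\<Sum>k\<in>{1..n}. \<Sum>l\<in>{1..n}. cc n (nat \<bar>int k - int l\<bar>)) = real n * cc n 0 + 2 * ((h n)\<^sup>2 * (\<Sum>r<n. real (n - Suc r) * C n (Suc r)))" .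
  have hp: "h n \<noteq> 0" using h_pos[of n] by simp
  have nn: "real n \<noteq> 0" using n by simp
  have R: "(\<Sum>r<n. delta n * (real (n - Suc r) / real n) * C n (Suc r)) = delta n / real n * (\<Sum>r<n. real (n - Suc r) * C n (Suc r))"
    unfolding sum_distrib_left by (intro sum.cong) auto
  show ?thesis unfolding V S R using hp nn
    by (simp add: field_simps power2_eq_square)
qed

end



context P2 begin

definition "psi u = u * \<pi> u"

lemma psi_nn: "0 < u \<Longrightarrow> 0 \<le> psi u"
  unfolding psi_def using pi_nonneg by simp

lemma ind_pi_meas: "(\<lambda>u. indicator {0<..} u * ((1 + u) * \<pi> u)) \<in> borel_measurable lborel"
  using pi_int unfolding set_integrable_def by auto

lemma ind_psi_int: "integrable lborel (\<lambda>u. indicator {0<..} u * psi u)"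
proof (rule Bochner_Integration.integrable_bound)
  show "integrable lborel (\<lambda>u. indicator {0<..} u * ((1 + u) * \<pi> u))"
    using pi_int unfolding set_integrable_def by simp
  have "(\<lambda>u. (indicator {0<..} u * ((1 + u) * \<pi> u)) * (u / (1 + u))) \<in> borel_measurable lborel"
    using ind_pi_meas by measurable
  moreover have "(\<lambda>u. (indicator {0<..} u * ((1 + u) * \<pi> u)) * (u / (1 + u))) = (\<lambda>u. indicator {0<..} u * psi u)"
    by (auto simp: indicator_def psi_def field_simps)
  ultimately show "(\<lambda>u. indicator {0<..} u * psi u) \<in> borel_measurable lborel" by simp
  show "AE u in lborel. norm (indicator {0<..} u * psi u) \<le> norm (indicator {0<..} u * ((1 + u) * \<pi> u))"
    using pi_nonneg by (auto simp: indicator_def psi_def intro!: AE_I2 mult_right_mono)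
qed

lemma K_exists: "\<exists>K. \<forall>n N. delta n \<le> 1 \<longrightarrow> (\<Sum>r<N. delta n * psi (real (Suc r) * delta n)) \<le> K"
proof -
  obtain B where B: "\<forall>u>0. \<bar>u * \<pi> u\<bar> \<le> B" using upi_bdd by blast
  obtain U0 where U0: "\<forall>u v. U0 \<le> u \<longrightarrow> u \<le> v \<longrightarrow> v * \<pi> v \<le> u * \<pi> u" using upi_decr by blast
  define U where "U = max U0 0"
  show ?thesis
  proof (intro exI allI impI)
    fix n N assume d1: "delta n \<le> 1"
    show "(\<Sum>r<N. delta n * psi (real (Suc r) * delta n)) \<le> (\<integral>u. indicator {0<..} u * psi u \<partial>lborel) + B * (U + 1)"
    proof (rule riemann_bound[OF psi_nn _ _ _ ind_psi_int delta_pos d1])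
      show "\<And>u. 0 < u \<Longrightarrow> psi u \<le> B" using B unfolding psi_def by force
      show "\<And>u v. U \<le> u \<Longrightarrow> u \<le> v \<Longrightarrow> psi v \<le> psi u" using U0 unfolding psi_def U_def by auto
      show "0 \<le> U" unfolding U_def by simp
    qed
  qed
qed

definition "Kc = (SOME K. \<forall>n N. delta n \<le> 1 \<longrightarrow> (\<Sum>r<N. delta n * psi (real (Suc r) * delta n)) \<le> K)"

lemma Kc: "delta n \<le> 1 \<Longrightarrow> (\<Sum>r<N. delta n * psi (real (Suc r) * delta n)) \<le> Kc"
  using someI_ex[OF K_exists] unfolding Kc_def by blast

definition "S n p = (\<Sum>r. delta n * g (real (Suc r) * delta n) p)"
definition "W n p = (\<Sum>r<n. delta n * (real (n - Suc r) / real n) * g (real (Suc r) * delta n) p)"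

lemma WS:
  assumes n: "0 < n" and d1: "delta n \<le> 1"
  shows "\<bar>S n p - W n p\<bar> \<le> Kc / (real n * delta n)"
proof -
  define d where "d = delta n"
  define T where "T = real n * d"
  have dp: "0 < d" unfolding d_def by (rule delta_pos)
  have Tp: "0 < T" unfolding T_def using n dp by simp
  define a where "a r = d * g (real (Suc r) * d) p" for r
  define b where "b r = d * psi (real (Suc r) * d)" for r
  have b_nn: "0 \<le> b r" for r unfolding b_def using dp psi_nn[of "real (Suc r) * d"] by simp
  have sa: "summable a" unfolding a_def d_def using riem_summable[of n p] by (simp add: g_def)
  have sb: "summable b"
  proof (rule bounded_imp_summable[where B=Kc, OF b_nn])
    fix m show "(\<Sum>k\<le>m. b k) \<le> Kc"
      using Kc[OF d1, of "Suc m"] unfolding b_def d_def lessThan_Suc_atMost by simp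
  qed
  have sbK: "suminf b \<le> Kc"
    by (rule suminf_le_const[OF sb]) (use Kc[OF d1] in \<open>simp add: b_def d_def\<close>)
  have a_le: "\<bar>a r\<bar> \<le> d * \<pi> (real (Suc r) * d)" for r
    unfolding a_def using g_bound[of "real (Suc r) * d" p] dp by (simp add: abs_mult g_def)
  have S_split: "S n p = (\<Sum>r. a (r + n)) + (\<Sum>r<n. a r)"
    unfolding S_def d_def[symmetric] a_def[symmetric] by (rule suminf_split_initial_segment[OF sa])
  have W_eq: "W n p = (\<Sum>r<n. (real (n - Suc r) / real n) * a r)"
    unfolding W_def a_def d_def by (simp add: algebra_simps)
  have diff: "S n p - W n p = (\<Sum>r. a (r + n)) + (\<Sum>r<n. (real (Suc r) / real n) * a r)"
  proof -
    have "(\<Sum>r<n. a r) - (\<Sum>r<n. (real (n - Suc r) / real n) * a r) = (\<Sum>r<n. (real (Suc r) / real n) * a r)"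
      unfolding sum_subtractf[symmetric]
    proof (intro sum.cong refl)
      fix r assume "r \<in> {..<n}"
      then have "real (n - Suc r) = real n - real (Suc r)" by (simp add: of_nat_diff)
      then show "a r - real (n - Suc r) / real n * a r = real (Suc r) / real n * a r"
        using n by (simp add: field_simps)
    qed
    then show ?thesis unfolding S_split W_eq by simp
  qed
  have t1: "\<bar>\<Sum>r<n. (real (Suc r) / real n) * a r\<bar> \<le> (\<Sum>r<n. b r) / T"
  proof -
    have "\<bar>\<Sum>r<n. (real (Suc r) / real n) * a r\<bar> \<le> (\<Sum>r<n. \<bar>(real (Suc r) / real n) * a r\<bar>)"
      by (rule sum_abs)
    also have "\<dots> \<le> (\<Sum>r<n. b r / T)"
    proof (intro sum_mono)
      fix r
      have "\<bar>(real (Suc r) / real n) * a r\<bar> \<le> (real (Suc r) / real n) * (d * \<pi> (real (Suc r) * d))"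
      proof -
        have "\<bar>real (Suc r) / real n\<bar> = real (Suc r) / real n" by simp
        then show ?thesis unfolding abs_mult using a_le[of r] by (metis mult_left_mono abs_ge_zero)
      qed
      also have "\<dots> = b r / T" unfolding b_def T_def psi_def using n dp by (simp add: field_simps)
      finally show "\<bar>(real (Suc r) / real n) * a r\<bar> \<le> b r / T" .
    qed
    also have "\<dots> = (\<Sum>r<n. b r) / T" by (simp add: sum_divide_distrib)
    finally show ?thesis .
  qed
  have sbn: "summable (\<lambda>r. b (r + n) / T)" using summable_ignore_initial_segment[OF sb, of n] by simp
  have abn: "\<bar>a (r + n)\<bar> \<le> b (r + n) / T" for r
  proof -
    let ?u = "real (Suc (r + n)) * d"
    have uT: "T \<le> ?u" unfolding T_def using dp by (simp add: mult_right_mono)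
    have up: "0 < ?u" using dp by simp
    have "\<bar>a (r + n)\<bar> \<le> d * \<pi> ?u" by (rule a_le)
    also have "\<dots> = d * psi ?u / ?u" unfolding psi_def using up by simp
    also have "\<dots> \<le> d * psi ?u / T"
      using psi_nn[OF up] dp Tp uT by (intro divide_left_mono mult_nonneg_nonneg) auto
    also have "\<dots> = b (r + n) / T" unfolding b_def ..
    finally show ?thesis .
  qed
  have san: "summable (\<lambda>r. \<bar>a (r + n)\<bar>)"
    by (rule summable_comparison_test[OF _ sbn]) (use abn in auto)
  have t2: "\<bar>\<Sum>r. a (r + n)\<bar> \<le> (\<Sum>r. b (r + n)) / T"
  proof -
    have "\<bar>\<Sum>r. a (r + n)\<bar> \<le> (\<Sum>r. \<bar>a (r + n)\<bar>)" by (rule summable_rabs[OF san])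
    also have "\<dots> \<le> (\<Sum>r. b (r + n) / T)" by (rule suminf_le[OF abn san sbn])
    also have "\<dots> = (\<Sum>r. b (r + n)) / T"
      using summable_ignore_initial_segment[OF sb, of n] by (simp add: suminf_divide)
    finally show ?thesis .
  qed
  have "\<bar>S n p - W n p\<bar> \<le> (\<Sum>r. b (r + n)) / T + (\<Sum>r<n. b r) / T"
    unfolding diff using t1 t2 by linarith
  also have "\<dots> = suminf b / T"
    using suminf_split_initial_segment[OF sb, of n] by (simp add: add_divide_distrib)
  also have "\<dots> \<le> Kc / T" using sbK Tp by (simp add: divide_right_mono)
  finally show ?thesis unfolding T_def d_def .
qed

end



context P2 begin

definition "Gf p = (LINT u:{0<..}|lborel. gcov fj f u p)"

lemma Gf_eq: "Gf p = (\<integral>u. indicator {0<..} u * g u p \<partial>lborel)"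
  unfolding Gf_def set_lebesgue_integral_def g_def by simp

lemma ind_pi_int: "integrable lborel (\<lambda>u. indicator {0<..} u * \<pi> u)"
proof (rule Bochner_Integration.integrable_bound)
  show "integrable lborel (\<lambda>u. indicator {0<..} u * ((1 + u) * \<pi> u))"
    using pi_int unfolding set_integrable_def by simp
  have "(\<lambda>u. (indicator {0<..} u * ((1 + u) * \<pi> u)) / (1 + u)) \<in> borel_measurable lborel"
    using ind_pi_meas by measurable
  moreover have "(\<lambda>u. (indicator {0<..} u * ((1 + u) * \<pi> u)) / (1 + u)) = (\<lambda>u. indicator {0<..} u * \<pi> u)"
    by (auto simp: indicator_def field_simps)
  ultimately show "(\<lambda>u. indicator {0<..} u * \<pi> u) \<in> borel_measurable lborel" by simp
  show "AE u in lborel. norm (indicator {0<..} u * \<pi> u) \<le> norm (indicator {0<..} u * ((1 + u) * \<pi> u))"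
  proof (intro AE_I2)
    fix u :: real
    show "norm (indicator {0<..} u * \<pi> u) \<le> norm (indicator {0<..} u * ((1 + u) * \<pi> u))"
    proof (cases "0 < u")
      case True
      then have "\<pi> u \<le> (1 + u) * \<pi> u" using pi_nonneg[OF True] by (simp add: algebra_simps)
      then show ?thesis using True pi_nonneg[OF True] by simp
    qed simp
  qed
qed

lemma g_meas_u[measurable]: "(\<lambda>u. g u p) \<in> borel_measurable lborel"
  using fj_meas[of p] unfolding g_def gcov_def by simp

lemma Gf_seq:
  assumes P: "P \<longlonglongrightarrow> (x, x)"
  shows "(\<lambda>k. Gf (P k)) \<longlonglongrightarrow> Gf (x, x)"
  unfolding Gf_eq
proof (rule integral_dominated_convergence[OF _ _ ind_pi_int])
  show "(\<lambda>u. indicator {0<..} u * g u (x, x)) \<in> borel_measurable lborel" by measurable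
  show "\<And>k. (\<lambda>u. indicator {0<..} u * g u (P k)) \<in> borel_measurable lborel" by measurable
  show "AE u in lborel. (\<lambda>k. indicator {0<..} u * g u (P k)) \<longlonglongrightarrow> indicator {0<..} u * g u (x, x)"
  proof (intro AE_I2)
    fix u :: real
    show "(\<lambda>k. indicator {0<..} u * g u (P k)) \<longlonglongrightarrow> indicator {0<..} u * g u (x, x)"
    proof (cases "0 < u")
      case True
      have "(\<lambda>k. g u (P k)) \<longlonglongrightarrow> g u (x, x)"
        unfolding g_def by (rule isCont_tendsto_compose[OF g_cont[OF True] P])
      then show ?thesis by (intro tendsto_mult tendsto_const)
    qed simp
  qed
  show "\<And>k. AE u in lborel. norm (indicator {0<..} u * g u (P k)) \<le> indicator {0<..} u * \<pi> u"
    using g_bound by (auto simp: indicator_def g_def intro!: AE_I2)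
qed

lemma Gf_cont:
  assumes e: "0 < e"
  shows "\<exists>\<eta>>0. \<forall>p. \<bar>fst p - x\<bar> < \<eta> \<and> \<bar>snd p - x\<bar> < \<eta> \<longrightarrow> \<bar>Gf p - Gf (x, x)\<bar> \<le> e"
proof (rule ccontr)
  assume "\<not> ?thesis"
  then have "\<forall>k. \<exists>p. \<bar>fst p - x\<bar> < inverse (real (Suc k)) \<and> \<bar>snd p - x\<bar> < inverse (real (Suc k)) \<and> \<bar>Gf p - Gf (x, x)\<bar> > e"
    by (metis inverse_positive_iff_positive not_le of_nat_0_less_iff zero_less_Suc)
  then obtain P where P: "\<And>k. \<bar>fst (P k) - x\<bar> < inverse (real (Suc k))" "\<And>k. \<bar>snd (P k) - x\<bar> < inverse (real (Suc k))"
      "\<And>k. \<bar>Gf (P k) - Gf (x, x)\<bar> > e"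
    by metis
  have c1: "(\<lambda>k. fst (P k) - x) \<longlonglongrightarrow> 0"
  proof (rule Lim_null_comparison[OF _ LIMSEQ_inverse_real_of_nat], rule always_eventually, rule allI)
    fix k show "norm (fst (P k) - x) \<le> inverse (real (Suc k))" using P(1)[of k] by simp
  qed
  have c2: "(\<lambda>k. snd (P k) - x) \<longlonglongrightarrow> 0"
  proof (rule Lim_null_comparison[OF _ LIMSEQ_inverse_real_of_nat], rule always_eventually, rule allI)
    fix k show "norm (snd (P k) - x) \<le> inverse (real (Suc k))" using P(2)[of k] by simp
  qed
  have "(\<lambda>k. (fst (P k), snd (P k))) \<longlonglongrightarrow> (x, x)"
    using tendsto_Pair[OF tendsto_add[OF c1 tendsto_const[of x]] tendsto_add[OF c2 tendsto_const[of x]]] by simp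
  then have "P \<longlonglongrightarrow> (x, x)" by simp
  from Gf_seq[OF this] have "(\<lambda>k. Gf (P k) - Gf (x, x)) \<longlonglongrightarrow> 0"
    using tendsto_diff[OF _ tendsto_const, of _ "Gf (x,x)" _ "Gf (x,x)"] by (simp add: LIM_zero)
  then have "eventually (\<lambda>k. norm (Gf (P k) - Gf (x, x)) < e) sequentially"
    using e by (auto dest: order_tendstoD(2)[OF tendsto_norm_zero] )
  then obtain k where "\<bar>Gf (P k) - Gf (x, x)\<bar> < e" by (auto simp: eventually_sequentially)
  with P(3)[of k] show False by simp
qed

end



context P2 begin

lemma PsiW_int: "integrable (lborel \<Otimes>\<^sub>M lborel) (\<lambda>p. Psi n p * W n p)"
proof -
  have "(\<lambda>p. Psi n p * W n p) = (\<lambda>p. \<Sum>r<n. (delta n * (real (n - Suc r) / real n)) * (Psi n p * g (real (Suc r) * delta n) p))"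
    unfolding W_def sum_distrib_left by (intro ext sum.cong) (auto simp: algebra_simps)
  moreover have "integrable (lborel \<Otimes>\<^sub>M lborel) (\<lambda>p. \<Sum>r<n. (delta n * (real (n - Suc r) / real n)) * (Psi n p * g (real (Suc r) * delta n) p))"
    using Psig_int delta_pos by (intro Bochner_Integration.integrable_sum Bochner_Integration.integrable_mult_right) auto
  ultimately show ?thesis by simp
qed

lemma A_eq: "(\<Sum>r<n. delta n * (real (n - Suc r) / real n) * C n (Suc r)) = (\<integral>p. Psi n p * W n p \<partial>(lborel \<Otimes>\<^sub>M lborel))"
proof -
  have eq: "(\<lambda>p. Psi n p * W n p) = (\<lambda>p. \<Sum>r<n. (delta n * (real (n - Suc r) / real n)) * (Psi n p * g (real (Suc r) * delta n) p))"
    unfolding W_def sum_distrib_left by (intro ext sum.cong) (auto simp: algebra_simps)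
  have "(\<integral>p. Psi n p * W n p \<partial>(lborel \<Otimes>\<^sub>M lborel))
     = (\<Sum>r<n. \<integral>p. (delta n * (real (n - Suc r) / real n)) * (Psi n p * g (real (Suc r) * delta n) p) \<partial>(lborel \<Otimes>\<^sub>M lborel))"
    unfolding eq
    by (rule Bochner_Integration.integral_sum, rule Bochner_Integration.integrable_mult_right, rule Psig_int)
       (use delta_pos in simp)
  also have "\<dots> = (\<Sum>r<n. delta n * (real (n - Suc r) / real n) * C n (Suc r))"
    unfolding C_def by simp
  finally show ?thesis by simp
qed

lemma diag_lim: "(\<lambda>n. delta n * cc n 0 / (h n)\<^sup>2) \<longlonglongrightarrow> 0"
proof (rule Lim_null_comparison)
  define Fp where "Fp = \<bar>Fb\<bar>"
  have Fp: "f y \<le> Fp" for y using Fb[of y] unfolding Fp_def by simp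
  have Fp0: "0 \<le> Fp" unfolding Fp_def by simp
  show "eventually (\<lambda>n. norm (delta n * cc n 0 / (h n)\<^sup>2) \<le> Fp * (delta n / h n) + Fp * Fp * delta n) sequentially"
  proof (intro always_eventually allI)
    fix n
    have hp: "0 < h n" by (rule h_pos)
    have dp: "0 < delta n" by (rule delta_pos)
    have i1: "integrable lborel (\<lambda>y. Fp * phi n y)" using phi_int by simp
    have i2: "integrable lborel (\<lambda>y. f y * (phi n y * phi n y))"
    proof (rule Bochner_Integration.integrable_bound[OF i1])
      show "(\<lambda>y. f y * (phi n y * phi n y)) \<in> borel_measurable lborel" by measurable
      show "AE y in lborel. norm (f y * (phi n y * phi n y)) \<le> norm (Fp * phi n y)"
      proof (intro AE_I2)
        fix y
        have a: "0 \<le> phi n y" "phi n y \<le> 1" by (rule phi_bounds)+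
        have "f y * (phi n y * phi n y) \<le> Fp * phi n y"
          using a Fp[of y] f_nonneg[of y] by (intro mult_mono) (auto simp: mult_le_one intro: mult_left_le_one_le order_trans[OF mult_right_le_one_le])
        moreover have "0 \<le> f y * (phi n y * phi n y)" using a f_nonneg[of y] by simp
        ultimately show "norm (f y * (phi n y * phi n y)) \<le> norm (Fp * phi n y)" using a Fp0 by simp
      qed
    qed
    have I2: "0 \<le> (\<integral>y. f y * (phi n y * phi n y) \<partial>lborel)" "(\<integral>y. f y * (phi n y * phi n y) \<partial>lborel) \<le> Fp * h n"
    proof -
      show "0 \<le> (\<integral>y. f y * (phi n y * phi n y) \<partial>lborel)"
        using phi_bounds f_nonneg by (intro integral_nonneg_AE AE_I2) auto
      have "(\<integral>y. f y * (phi n y * phi n y) \<partial>lborel) \<le> (\<integral>y. Fp * phi n y \<partial>lborel)"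
      proof (rule integral_mono[OF i2 i1])
        fix y
        have a: "0 \<le> phi n y" "phi n y \<le> 1" by (rule phi_bounds)+
        have "phi n y * phi n y \<le> phi n y" using a by (simp add: mult_left_le_one_le)
        then show "f y * (phi n y * phi n y) \<le> Fp * phi n y"
          using a Fp[of y] f_nonneg[of y] by (intro mult_mono) auto
      qed
      also have "\<dots> = Fp * h n" using phi_integral by simp
      finally show "(\<integral>y. f y * (phi n y * phi n y) \<partial>lborel) \<le> Fp * h n" .
    qed
    have M: "0 \<le> m n" "m n \<le> Fp * h n"
    proof -
      show "0 \<le> m n" unfolding m_def using phi_bounds f_nonneg by (intro integral_nonneg_AE AE_I2) auto
      have "m n \<le> (\<integral>y. Fp * phi n y \<partial>lborel)" unfolding m_def
        by (rule integral_mono[OF fphi_int i1]) (use Fp phi_bounds in \<open>auto intro: mult_right_mono\<close>)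
      also have "\<dots> = Fp * h n" using phi_integral by simp
      finally show "m n \<le> Fp * h n" .
    qed
    have m2: "(m n)\<^sup>2 \<le> (Fp * h n)\<^sup>2" using M by (intro power_mono) auto
    have c0: "cc n 0 = (\<integral>y. f y * (phi n y * phi n y) \<partial>lborel) - (m n)\<^sup>2" unfolding cc_def by simp
    have z: "0 \<le> (m n)\<^sup>2" "0 \<le> (Fp * h n)\<^sup>2" by simp_all
    have "\<bar>cc n 0\<bar> \<le> Fp * h n + (Fp * h n)\<^sup>2"
      unfolding c0 abs_le_iff using I2 m2 z by linarith
    then have "\<bar>delta n * cc n 0 / (h n)\<^sup>2\<bar> \<le> delta n * (Fp * h n + (Fp * h n)\<^sup>2) / (h n)\<^sup>2"
      using dp hp by (simp add: abs_mult divide_right_mono mult_left_mono)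
    also have "\<dots> = Fp * (delta n / h n) + Fp * Fp * delta n"
      using hp by (simp add: field_simps power2_eq_square)
    finally show "norm (delta n * cc n 0 / (h n)\<^sup>2) \<le> Fp * (delta n / h n) + Fp * Fp * delta n" by simp
  qed
  show "(\<lambda>n. Fp * (delta n / h n) + Fp * Fp * delta n) \<longlonglongrightarrow> 0"
    using tendsto_add[OF tendsto_mult[OF tendsto_const delta_o_h] tendsto_mult[OF tendsto_const delta_lim]] by simp
qed

end



context P2 begin

lemma A_lim: "(\<lambda>n. \<Sum>r<n. delta n * (real (n - Suc r) / real n) * C n (Suc r)) \<longlonglongrightarrow> Gf (x, x)"
  unfolding A_eq tendsto_iff dist_real_def
proof (intro allI impI)
  fix e :: real assume e: "0 < e"
  define \<epsilon> where "\<epsilon> = e / 4"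
  have ep: "0 < \<epsilon>" unfolding \<epsilon>_def using e by simp
  obtain \<eta> where \<eta>: "0 < \<eta>" "\<And>p. \<bar>fst p - x\<bar> < \<eta> \<and> \<bar>snd p - x\<bar> < \<eta> \<Longrightarrow> \<bar>Gf p - Gf (x, x)\<bar> \<le> \<epsilon>"
    using Gf_cont[OF ep] by blast
  have ev1: "eventually (\<lambda>n. 0 < n) sequentially" by (rule eventually_gt_at_top)
  have ev2: "eventually (\<lambda>n. delta n < 1) sequentially"
    using order_tendstoD(2)[OF delta_lim, of 1] by simp
  have ev3: "eventually (\<lambda>n. h n < \<eta> / 2) sequentially"
    using order_tendstoD(2)[OF h_lim, of "\<eta> / 2"] \<eta>(1) by simp
  have ev4: "eventually (\<lambda>n. \<forall>p. \<bar>S n p - Gf p\<bar> \<le> \<epsilon>) sequentially"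
    using riem_unif[OF ep] unfolding S_def Gf_def g_def .
  have "(\<lambda>n. Kc / (real n * delta n)) \<longlonglongrightarrow> 0"
    by (rule tendsto_divide_0[OF tendsto_const filterlim_at_top_imp_at_infinity[OF T_lim]])
  then have ev5: "eventually (\<lambda>n. Kc / (real n * delta n) < \<epsilon>) sequentially"
    using order_tendstoD(2) ep by blast
  show "eventually (\<lambda>n. \<bar>(\<integral>p. Psi n p * W n p \<partial>(lborel \<Otimes>\<^sub>M lborel)) - Gf (x, x)\<bar> < e) sequentially"
    using ev1 ev2 ev3 ev4 ev5
  proof eventually_elim
    case (elim n)
    let ?G = "Gf (x, x)"
    have pw: "\<bar>Psi n p * W n p - Psi n p * ?G\<bar> \<le> Psi n p * (3 * \<epsilon>)" for p
    proof (cases "Psi n p = 0")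
      case True then show ?thesis using ep by simp
    next
      case False
      from Psi_support[OF False] elim(3) have "\<bar>fst p - x\<bar> < \<eta> \<and> \<bar>snd p - x\<bar> < \<eta>" by linarith
      then have a: "\<bar>Gf p - ?G\<bar> \<le> \<epsilon>" by (rule \<eta>(2))
      have b: "\<bar>S n p - W n p\<bar> \<le> Kc / (real n * delta n)" using WS[OF elim(1)] elim(2) by simp
      have c: "\<bar>S n p - Gf p\<bar> \<le> \<epsilon>" using elim(4) by blast
      have "\<bar>W n p - ?G\<bar> \<le> 3 * \<epsilon>" using a b c elim(5) by linarith
      then have "Psi n p * \<bar>W n p - ?G\<bar> \<le> Psi n p * (3 * \<epsilon>)" using Psi_nonneg by (intro mult_left_mono) auto
      then show ?thesis using Psi_nonneg[of n p] by (simp add: abs_mult right_diff_distrib[symmetric])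
    qed
    have i1: "integrable (lborel \<Otimes>\<^sub>M lborel) (\<lambda>p. Psi n p * W n p - Psi n p * ?G)"
      using PsiW_int Psi_int by auto
    have "\<bar>\<integral>p. Psi n p * W n p - Psi n p * ?G \<partial>(lborel \<Otimes>\<^sub>M lborel)\<bar> \<le> (\<integral>p. Psi n p * (3 * \<epsilon>) \<partial>(lborel \<Otimes>\<^sub>M lborel))"
      by (rule integral_abs_bound_integral[OF i1]) (use Psi_int pw in auto)
    also have "\<dots> = 3 * \<epsilon>" using Psi_integral[of n] by simp
    also have "(\<integral>p. Psi n p * W n p - Psi n p * ?G \<partial>(lborel \<Otimes>\<^sub>M lborel)) = (\<integral>p. Psi n p * W n p \<partial>(lborel \<Otimes>\<^sub>M lborel)) - ?G"
      using PsiW_int Psi_int Psi_integral[of n] by simp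
    finally show ?case unfolding \<epsilon>_def using e by simp
  qed
qed

lemma main:
  "(\<lambda>n. real n * delta n * prob_space.variance M (freq_poly X (delta n) n (a n) (h n) x))
     \<longlonglongrightarrow> 2 * (LINT u:{0<..}|lborel. gcov fj f u (x, x))"
proof -
  have L: "(\<lambda>n. delta n * cc n 0 / (h n)\<^sup>2 + 2 * (\<Sum>r<n. delta n * (real (n - Suc r) / real n) * C n (Suc r)))
      \<longlonglongrightarrow> 0 + 2 * Gf (x, x)"
    by (intro tendsto_add diag_lim tendsto_mult tendsto_const A_lim)
  have ev: "eventually (\<lambda>n. delta n * cc n 0 / (h n)\<^sup>2 + 2 * (\<Sum>r<n. delta n * (real (n - Suc r) / real n) * C n (Suc r))
      = real n * delta n * prob_space.variance M (freq_poly X (delta n) n (a n) (h n) x)) sequentially"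
    using eventually_gt_at_top[of 0] by eventually_elim (simp add: TVar)
  show ?thesis using Lim_transform_eventually[OF L ev] unfolding Gf_def by simp
qed

end


theorem proposition2:
  fixes M :: "'a measure"
    and X :: "real \<Rightarrow> 'a \<Rightarrow> real"
    and f :: "real \<Rightarrow> real"
    and fj :: "real \<Rightarrow> real \<times> real \<Rightarrow> real"
    and \<pi> :: "real \<Rightarrow> real"
    and delta h a :: "nat \<Rightarrow> real"
    and x :: real
  assumes prob: "prob_space M"
    and meas_proc: "(\<lambda>(t, \<omega>). X t \<omega>) \<in> borel_measurable (lborel \<Otimes>\<^sub>M M)"
    and f_nonneg: "\<And>y. 0 \<le> f y"
    and marg: "\<And>t. distributed M lborel (X t) (\<lambda>y. ennreal (f y))"
    and fj_nonneg: "\<And>u p. 0 < u \<Longrightarrow> 0 \<le> fj u p"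
    and joint: "\<And>s t. s \<noteq> t \<Longrightarrow>
        distributed M (lborel \<Otimes>\<^sub>M lborel) (\<lambda>\<omega>. (X s \<omega>, X t \<omega>)) (\<lambda>p. ennreal (fj \<bar>t - s\<bar> p))"
    and fj_meas: "\<And>p. (\<lambda>u. fj u p) \<in> borel_measurable borel"
    and f_cont: "continuous_on UNIV f"
    and f_bdd: "bounded (range f)"
    and delta_pos: "\<And>n. 0 < delta n"
    and delta_lim: "delta \<longlonglongrightarrow> 0"
    and T_lim: "filterlim (\<lambda>n. real n * delta n) at_top sequentially"
    and h_pos: "\<And>n. 0 < h n"
    and h_lim: "h \<longlonglongrightarrow> 0"
    and nh_lim: "filterlim (\<lambda>n. real n * h n) at_top sequentially"
    and g_bound: "\<And>u p. 0 < u \<Longrightarrow> \<bar>gcov fj f u p\<bar> \<le> \<pi> u"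
    and pi_int: "set_integrable lborel {0<..} (\<lambda>u. (1 + u) * \<pi> u)"
    and upi_bdd: "\<exists>B. \<forall>u>0. \<bar>u * \<pi> u\<bar> \<le> B"
    and upi_decr: "\<exists>U. \<forall>u v. U \<le> u \<longrightarrow> u \<le> v \<longrightarrow> v * \<pi> v \<le> u * \<pi> u"
    and g_cont: "\<And>u. 0 < u \<Longrightarrow> isCont (gcov fj f u) (x, x)"
    and riem_summable: "\<And>n p. summable (\<lambda>r. delta n * gcov fj f (real (Suc r) * delta n) p)"
    and riem_unif: "\<And>\<epsilon>. 0 < \<epsilon> \<Longrightarrow> eventually (\<lambda>n. \<forall>p.
        \<bar>(\<Sum>r. delta n * gcov fj f (real (Suc r) * delta n) p)
          - (LINT u:{0<..}|lborel. gcov fj f u p)\<bar> \<le> \<epsilon>) sequentially"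
    and delta_o_h: "(\<lambda>n. delta n / h n) \<longlonglongrightarrow> 0"
  shows "(\<lambda>n. real n * delta n * prob_space.variance M (freq_poly X (delta n) n (a n) (h n) x))
           \<longlonglongrightarrow> 2 * (LINT u:{0<..}|lborel. gcov fj f u (x, x))"
  proof -
  interpret P: P2 M X f fj \<pi> delta h a x
    by (rule P2.intro[OF prob f_nonneg marg fj_nonneg joint fj_meas f_cont f_bdd delta_pos delta_lim T_lim
        h_pos h_lim g_bound pi_int upi_bdd upi_decr g_cont riem_summable riem_unif delta_o_h])
  show ?thesis by (rule P.main)
qed

end
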